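(* Let $S\subseteq\{0,1,\dots,\omega\}$ be finite. (i) $A\vdash_{\mathbf{RC}_S}B$ iff $A\vdash B$ is true in all finite RC$_S$-models. (ii) $A\vdash_{\mathbf{RC\omega}_S}B$ iff $A\vdash B$ is true in all finite persistent RC$_S$-models.
   Context: Strictly positive formulas: $A::= p\mid \top\mid (A\land B)\mid \alpha A$, $\alpha\le\omega$; for a signature $S$, ${\mathcal L}_S$ is the set of such formulas using only modalities from $S$, and $L_S$ is the logic $L$ with axioms and rules restricted to ${\mathcal L}_S$. $\mathbf{RJ}$: $A\vdash A$; $A\vdash\top$; cut; $A\land B\vdash A$; $A\land B\vdash B$; from $A\vdash B$, $A\vdash C$ infer $A\vdash B\land C$; from $A\vdash B$ infer $\alpha A\vdash\alpha B$; $\alpha\alpha A\vdash\alpha A$; $\alpha\beta A\vdash\beta A$, $\beta\alpha A\vdash\beta A$ for $\alpha\ge\beta$; $\alpha A\land\beta B\vdash\alpha(A\land\beta B)$ for $\alpha>\beta$. $\mathbf{RC}=\mathbf{RJ}+\{\alpha A\vdash\beta A:\alpha>\beta\}$; $\mathbf{RC\omega}=\mathbf{RC}+\{\omega A\vdash A\}$. Kripke model for $S$: nonempty $W$, relations $(R_\alpha)_{\alpha\in S}$, valuation; $x\Vdash\alpha A$ iff $\exists y(xR_\alpha y\wedge y\Vdash A)$, with usual clauses for $\top,\land$. RC$_S$-frame: for all $\alpha,\beta\in S$, $R_\alpha R_\beta\subseteq R_{\min(\alpha,\beta)}$; for $\alpha>\beta$, $xR_\alpha y\wedge xR_\beta z\Rightarrow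 yR_\beta z$; and $R_\alpha\subseteq R_\beta$ for $\beta<\alpha$. Persistent: $x\Vdash p$ and $yR_\omega x$ imply $y\Vdash p$ (if $\omega\in S$). Finite model: $W$ finite. A sequent is true in a model if it holds at every node. *)

theory Defs
  imports Main "HOL-Library.Extended_Nat"
begin

text \<open>Modalities are indexed by ordinals \<open>\<alpha> \<le> \<omega>\<close>, represented by \<open>enat\<close>
  (natural numbers together with \<open>\<infinity>\<close> = \<omega>).\<close>

datatype 'p form =
    Var 'p
  | Top
  | Conj "'p form" "'p form"
  | Dia enat "'p form"

fun mods :: "'p form \<Rightarrow> enat set" where
  "mods (Var p) = {}"
| "mods Top = {}"
| "mods (Conj A B) = mods A \<union> mods B"
| "mods (Dia a A) = insert a (mods A)"

definition inL :: "enat set \<Rightarrow> 'p form \<Rightarrow> bool" where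
  "inL S A \<longleftrightarrow> mods A \<subseteq> S"

inductive deriv :: "bool \<Rightarrow> enat set \<Rightarrow> 'p form \<Rightarrow> 'p form \<Rightarrow> bool" for w S where
  refl: "inL S A \<Longrightarrow> deriv w S A A"
| top: "inL S A \<Longrightarrow> deriv w S A Top"
| cut: "deriv w S A B \<Longrightarrow> deriv w S B C \<Longrightarrow> deriv w S A C"
| conjE1: "inL S A \<Longrightarrow> inL S B \<Longrightarrow> deriv w S (Conj A B) A"
| conjE2: "inL S A \<Longrightarrow> inL S B \<Longrightarrow> deriv w S (Conj A B) B"
| conjI: "deriv w S A B \<Longrightarrow> deriv w S A C \<Longrightarrow> deriv w S A (Conj B C)"
| mono: "a \<in> S \<Longrightarrow> deriv w S A B \<Longrightarrow> deriv w S (Dia a A) (Dia a B)"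
| trans4: "a \<in> S \<Longrightarrow> inL S A \<Longrightarrow> deriv w S (Dia a (Dia a A)) (Dia a A)"
| mix1: "a \<in> S \<Longrightarrow> b \<in> S \<Longrightarrow> a \<ge> b \<Longrightarrow> inL S A \<Longrightarrow>
           deriv w S (Dia a (Dia b A)) (Dia b A)"
| mix2: "a \<in> S \<Longrightarrow> b \<in> S \<Longrightarrow> a \<ge> b \<Longrightarrow> inL S A \<Longrightarrow>
           deriv w S (Dia b (Dia a A)) (Dia b A)"
| J5: "a \<in> S \<Longrightarrow> b \<in> S \<Longrightarrow> a > b \<Longrightarrow> inL S A \<Longrightarrow> inL S B \<Longrightarrow>
           deriv w S (Conj (Dia a A) (Dia b B)) (Dia a (Conj A (Dia b B)))"
| RC: "a \<in> S \<Longrightarrow> b \<in> S \<Longrightarrow> a > b \<Longrightarrow> inL S A \<Longrightarrow>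
           deriv w S (Dia a A) (Dia b A)"
| omega: "w \<Longrightarrow> \<infinity> \<in> S \<Longrightarrow> inL S A \<Longrightarrow> deriv w S (Dia \<infinity> A) A"

abbreviation RC_der :: "enat set \<Rightarrow> 'p form \<Rightarrow> 'p form \<Rightarrow> bool" where
  "RC_der \<equiv> deriv False"

abbreviation RCw_der :: "enat set \<Rightarrow> 'p form \<Rightarrow> 'p form \<Rightarrow> bool" where
  "RCw_der \<equiv> deriv True"

fun sat :: "'w set \<Rightarrow> (enat \<Rightarrow> 'w \<Rightarrow> 'w \<Rightarrow> bool) \<Rightarrow> ('p \<Rightarrow> 'w set) \<Rightarrow> 'w \<Rightarrow> 'p form \<Rightarrow> bool" where
  "sat W R V x (Var p) = (x \<in> V p)"
| "sat W R V x Top = True"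
| "sat W R V x (Conj A B) = (sat W R V x A \<and> sat W R V x B)"
| "sat W R V x (Dia a A) = (\<exists>y\<in>W. R a x y \<and> sat W R V y A)"

definition RC_frame :: "enat set \<Rightarrow> 'w set \<Rightarrow> (enat \<Rightarrow> 'w \<Rightarrow> 'w \<Rightarrow> bool) \<Rightarrow> bool" where
  "RC_frame S W R \<longleftrightarrow>
     W \<noteq> {} \<and>
     (\<forall>a\<in>S. \<forall>x y. R a x y \<longrightarrow> x \<in> W \<and> y \<in> W) \<and>
     (\<forall>a\<in>S. \<forall>b\<in>S. \<forall>x\<in>W. \<forall>y\<in>W. \<forall>z\<in>W. R a x y \<and> R b y z \<longrightarrow> R (min a b) x z) \<and>
     (\<forall>a\<in>S. \<forall>b\<in>S. a > b \<longrightarrow> (\<forall>x\<in>W. \<forall>y\<in>W. \<forall>z\<in>W. R a x y \<and> R b x z \<longrightarrow> R b y z)) \<and>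
     (\<forall>a\<in>S. \<forall>b\<in>S. b < a \<longrightarrow> (\<forall>x\<in>W. \<forall>y\<in>W. R a x y \<longrightarrow> R b x y))"

definition persistent :: "enat set \<Rightarrow> 'w set \<Rightarrow> (enat \<Rightarrow> 'w \<Rightarrow> 'w \<Rightarrow> bool) \<Rightarrow> ('p \<Rightarrow> 'w set) \<Rightarrow> bool" where
  "persistent S W R V \<longleftrightarrow>
     (\<infinity> \<in> S \<longrightarrow> (\<forall>p. \<forall>x\<in>W. \<forall>y\<in>W. x \<in> V p \<and> R \<infinity> y x \<longrightarrow> y \<in> V p))"

definition true_in :: "'w set \<Rightarrow> (enat \<Rightarrow> 'w \<Rightarrow> 'w \<Rightarrow> bool) \<Rightarrow> ('p \<Rightarrow> 'w set) \<Rightarrow> 'p form \<Rightarrow> 'p form \<Rightarrow> bool" where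
  "true_in W R V A B \<longleftrightarrow> (\<forall>x\<in>W. sat W R V x A \<longrightarrow> sat W R V x B)"

text \<open>Finite models; worlds are taken from \<open>nat\<close>, which is no loss of generality since every
  finite model is isomorphic to one on a finite subset of \<open>nat\<close>.\<close>
definition valid_finite_RC :: "enat set \<Rightarrow> 'p form \<Rightarrow> 'p form \<Rightarrow> bool" where
  "valid_finite_RC S A B \<longleftrightarrow>
     (\<forall>(W::nat set) R V. finite W \<and> RC_frame S W R \<longrightarrow> true_in W R V A B)"

definition valid_finite_persistent_RC :: "enat set \<Rightarrow> 'p form \<Rightarrow> 'p form \<Rightarrow> bool" where
  "valid_finite_persistent_RC S A B \<longleftrightarrow>
     (\<forall>(W::nat set) R V. finite W \<and> RC_frame S W R \<and> persistent S W R V \<longrightarrow> true_in W R V A B)"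

end

theory Submission
  imports Defs
begin

lemma inL_simps[simp]:
  "inL S (Var p)" "inL S Top"
  "inL S (Conj A B) \<longleftrightarrow> inL S A \<and> inL S B"
  "inL S (Dia a A) \<longleftrightarrow> a \<in> S \<and> inL S A"
  by (auto simp: inL_def)

lemma frD:
  assumes "RC_frame S W R"
  shows "a \<in> S \<Longrightarrow> R a x y \<Longrightarrow> x \<in> W \<and> y \<in> W"
  and "a \<in> S \<Longrightarrow> b \<in> S \<Longrightarrow> x \<in> W \<Longrightarrow> y \<in> W \<Longrightarrow> z \<in> W \<Longrightarrow> R a x y \<Longrightarrow> R b y z \<Longrightarrow> R (min a b) x z"
  and "a \<in> S \<Longrightarrow> b \<in> S \<Longrightarrow> a > b \<Longrightarrow> x \<in> W \<Longrightarrow> y \<in> W \<Longrightarrow> z \<in> W \<Longrightarrow> R a x y \<Longrightarrow> R b x z \<Longrightarrow> R b y z"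
  and "a \<in> S \<Longrightarrow> b \<in> S \<Longrightarrow> b < a \<Longrightarrow> x \<in> W \<Longrightarrow> y \<in> W \<Longrightarrow> R a x y \<Longrightarrow> R b x y"
  using assms unfolding RC_frame_def by blast+

lemma persist_lemma:
  assumes fr: "RC_frame S W R" and pe: "persistent S W R V" and inf: "\<infinity> \<in> S"
  shows "inL S A \<Longrightarrow> x \<in> W \<Longrightarrow> y \<in> W \<Longrightarrow> R \<infinity> x y \<Longrightarrow> sat W R V y A \<Longrightarrow> sat W R V x A"
proof (induction A arbitrary: x y)
  case (Var p)
  have "\<forall>p. \<forall>x\<in>W. \<forall>y\<in>W. x \<in> V p \<and> R \<infinity> y x \<longrightarrow> y \<in> V p"
    using pe inf unfolding persistent_def by (rule mp)
  then have "y \<in> V p \<Longrightarrow> x \<in> V p" using Var.prems(2,3,4) by blast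
  then show ?case using Var.prems(5) by simp
next
  case Top
  show ?case by simp
next
  case (Conj A1 A2)
  have p1: "inL S A1" "inL S A2" using Conj.prems(1) by simp_all
  have p2: "sat W R V y A1" "sat W R V y A2" using Conj.prems(5) by simp_all
  have "sat W R V x A1" using Conj.IH(1)[OF p1(1) Conj.prems(2,3,4) p2(1)] .
  moreover have "sat W R V x A2" using Conj.IH(2)[OF p1(2) Conj.prems(2,3,4) p2(2)] .
  ultimately show ?case by simp
next
  case (Dia b A)
  from Dia.prems(5) obtain z where z: "z \<in> W" "R b y z" "sat W R V z A" by auto
  have b: "b \<in> S" using Dia.prems(1) by simp
  have "R (min \<infinity> b) x z" using fr inf b Dia.prems(2,3) z(1) Dia.prems(4) z(2) unfolding RC_frame_def by blast
  then show ?case using z by auto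
qed

lemma sound:
  assumes "deriv w S A B"
  shows "RC_frame S W R \<Longrightarrow> (w \<longrightarrow> persistent S W R V) \<Longrightarrow> x \<in> W
     \<Longrightarrow> sat W R V x A \<Longrightarrow> sat W R V x B"
  using assms
proof (induction arbitrary: x rule: deriv.induct)
  case (cut A B C)
  show ?case using cut.IH(2)[OF cut.prems(1,2,3) cut.IH(1)[OF cut.prems]] .
next
  case (conjI A B C)
  show ?case using conjI.IH(1)[OF conjI.prems] conjI.IH(2)[OF conjI.prems] by simp
next
  case (mono a A B)
  from mono.prems(4) obtain y where y: "y \<in> W" "R a x y" "sat W R V y A" by auto
  have "sat W R V y B" using mono.IH[OF mono.prems(1,2) y(1,3)] .
  then show ?case using y by auto
next
  case (trans4 a A)
  from trans4.prems(4) obtain y z where yz: "y \<in> W" "z \<in> W" "R a x y" "R a y z" "sat W R V z A" by auto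
  have "R (min a a) x z" using frD(2)[OF trans4.prems(1) trans4.hyps(1) trans4.hyps(1) trans4.prems(3) yz(1,2,3,4)] .
  then show ?case using yz by auto
next
  case (mix1 a b A)
  from mix1.prems(4) obtain y z where yz: "y \<in> W" "z \<in> W" "R a x y" "R b y z" "sat W R V z A" by auto
  have "R (min a b) x z" using frD(2)[OF mix1.prems(1) mix1.hyps(1,2) mix1.prems(3) yz(1,2,3,4)] .
  moreover have "min a b = b" using mix1.hyps(3) by (simp add: min_def)
  ultimately show ?case using yz by auto
next
  case (mix2 a b A)
  from mix2.prems(4) obtain y z where yz: "y \<in> W" "z \<in> W" "R b x y" "R a y z" "sat W R V z A" by auto
  have "R (min b a) x z" using frD(2)[OF mix2.prems(1) mix2.hyps(2,1) mix2.prems(3) yz(1,2,3,4)] .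
  moreover have "min b a = b" using mix2.hyps(3) by (simp add: min_def)
  ultimately show ?case using yz by auto
next
  case (J5 a b A B)
  from J5.prems(4) obtain y z where yz: "y \<in> W" "z \<in> W" "R a x y" "R b x z" "sat W R V y A" "sat W R V z B" by auto
  have "R b y z" using frD(3)[OF J5.prems(1) J5.hyps(1,2,3) J5.prems(3) yz(1,2,3,4)] .
  then show ?case using yz by auto
next
  case (RC a b A)
  from RC.prems(4) obtain y where yz: "y \<in> W" "R a x y" "sat W R V y A" by auto
  have "R b x y" using frD(4)[OF RC.prems(1) RC.hyps(1,2,3) RC.prems(3) yz(1,2)] .
  then show ?case using yz by auto
next
  case (omega A)
  from omega.prems(4) obtain y where yz: "y \<in> W" "R \<infinity> x y" "sat W R V y A" by auto
  have pe: "persistent S W R V" using omega.hyps(1) omega.prems(2) by simp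
  show ?case using persist_lemma[OF omega.prems(1) pe omega.hyps(2,3) omega.prems(3) yz(1,2,3)] .
qed simp_all


lemma deriv_inL: "deriv w S A B \<Longrightarrow> inL S A \<and> inL S B"
  by (induction rule: deriv.induct) auto

definition bigc :: "'p form list \<Rightarrow> 'p form \<Rightarrow> 'p form" where
  "bigc L X = foldr (\<lambda>F acc. Conj acc F) L X"

lemma bigc_simps[simp]: "bigc [] X = X" "bigc (F # L) X = Conj (bigc L X) F"
  by (simp_all add: bigc_def)

lemma bigc_inL: "inL S X \<Longrightarrow> (\<forall>F\<in>set L. inL S F) \<Longrightarrow> inL S (bigc L X)"
  by (induction L) auto

lemma bigc_E1: "inL S X \<Longrightarrow> (\<forall>F\<in>set L. inL S F) \<Longrightarrow> deriv w S (bigc L X) X"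
proof (induction L)
  case Nil
  then show ?case by (simp add: deriv.refl)
next
  case (Cons F L)
  have i: "inL S (bigc L X)" "inL S F" using bigc_inL[OF Cons.prems(1)] Cons.prems(2) by auto
  have "deriv w S (bigc L X) X" using Cons by simp
  moreover have "deriv w S (Conj (bigc L X) F) (bigc L X)" using deriv.conjE1[OF i] .
  ultimately show ?case using deriv.cut by fastforce
qed

lemma bigc_E2: "inL S X \<Longrightarrow> (\<forall>F\<in>set L. inL S F) \<Longrightarrow> F \<in> set L \<Longrightarrow> deriv w S (bigc L X) F"
proof (induction L)
  case Nil
  then show ?case by simp
next
  case (Cons G L)
  have i: "inL S (bigc L X)" "inL S G" using bigc_inL[OF Cons.prems(1)] Cons.prems(2) by auto
  show ?case
  proof (cases "F = G")
    case True
    then show ?thesis using deriv.conjE2[OF i] by simp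
  next
    case False
    then have "deriv w S (bigc L X) F" using Cons by simp
    moreover have "deriv w S (Conj (bigc L X) G) (bigc L X)" using deriv.conjE1[OF i] .
    ultimately show ?thesis using deriv.cut by fastforce
  qed
qed

lemma bigc_J:
  assumes "deriv w S G (Dia a X)" "a \<in> S" "inL S X"
  shows "(\<forall>F\<in>set L. \<exists>c D. F = Dia c D \<and> c < a \<and> c \<in> S \<and> inL S D \<and> deriv w S G F)
     \<Longrightarrow> deriv w S G (Dia a (bigc L X))"
proof (induction L)
  case Nil
  then show ?case using assms by simp
next
  case (Cons F L)
  obtain c D where F: "F = Dia c D" "c < a" "c \<in> S" "inL S D" "deriv w S G F"
    using Cons.prems by auto
  have ih: "deriv w S G (Dia a (bigc L X))" using Cons by simp
  have i: "inL S (bigc L X)"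
    using bigc_inL[OF assms(3), of L] Cons.prems by fastforce
  have "deriv w S G (Conj (Dia a (bigc L X)) (Dia c D))" using deriv.conjI[OF ih] F by simp
  moreover have "deriv w S (Conj (Dia a (bigc L X)) (Dia c D)) (Dia a (Conj (bigc L X) (Dia c D)))"
    using deriv.J5[OF assms(2) F(3) F(2) i F(4)] .
  ultimately show ?case using deriv.cut F(1) by fastforce
qed

lemma transfer:
  fixes W :: "'w set"
  assumes fin: "finite W" and fr: "RC_frame S W R" and pe: "w \<longrightarrow> persistent S W R V"
    and x: "x \<in> W" and sA: "sat W R V x A" and sB: "\<not> sat W R V x B"
  shows "\<exists>(W'::nat set) R' V'. finite W' \<and> RC_frame S W' R' \<and> (w \<longrightarrow> persistent S W' R' V')
     \<and> \<not> true_in W' R' V' A B"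
proof -
  obtain h :: "'w \<Rightarrow> nat" and n where h: "h ` W = {i. i < n}" "inj_on h W"
    using finite_imp_inj_to_nat_seg[OF fin] by blast
  define g where "g = inv_into W h"
  define W' where "W' = h ` W"
  define R' where "R' = (\<lambda>a m k. m \<in> W' \<and> k \<in> W' \<and> R a (g m) (g k))"
  define V' where "V' = (\<lambda>p. {m \<in> W'. g m \<in> V p})"
  have gW: "m \<in> W' \<Longrightarrow> g m \<in> W" for m unfolding g_def W'_def by (rule inv_into_into)
  have gh: "u \<in> W \<Longrightarrow> g (h u) = u" for u unfolding g_def using h(2) by (rule inv_into_f_f)
  have hW: "u \<in> W \<Longrightarrow> h u \<in> W'" for u unfolding W'_def by simp
  have sat_tr: "m \<in> W' \<Longrightarrow> sat W' R' V' m C \<longleftrightarrow> sat W R V (g m) C" for m C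
  proof (induction C arbitrary: m)
    case (Var p)
    then show ?case by (simp add: V'_def)
  next
    case Top
    then show ?case by simp
  next
    case (Conj C1 C2)
    then show ?case by simp
  next
    case (Dia a C)
    show ?case
    proof
      assume "sat W' R' V' m (Dia a C)"
      then obtain k where k: "k \<in> W'" "R' a m k" "sat W' R' V' k C" by auto
      have "sat W R V (g k) C" using Dia.IH[OF k(1)] k(3) by simp
      moreover have "R a (g m) (g k)" using k(2) R'_def by simp
      ultimately show "sat W R V (g m) (Dia a C)" using gW[OF k(1)] by auto
    next
      assume "sat W R V (g m) (Dia a C)"
      then obtain v where v: "v \<in> W" "R a (g m) v" "sat W R V v C" by auto
      have "sat W' R' V' (h v) C" using Dia.IH[OF hW[OF v(1)]] gh[OF v(1)] v(3) by simp
      moreover have "R' a m (h v)" using R'_def Dia.prems hW[OF v(1)] gh[OF v(1)] v(2) by simp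
      ultimately show "sat W' R' V' m (Dia a C)" using hW[OF v(1)] by auto
    qed
  qed
  have c1: "W' \<noteq> {}" using hW[OF x] by auto
  have c2: "\<forall>a\<in>S. \<forall>m k. R' a m k \<longrightarrow> m \<in> W' \<and> k \<in> W'" unfolding R'_def by simp
  have c3: "\<forall>a\<in>S. \<forall>b\<in>S. \<forall>m\<in>W'. \<forall>k\<in>W'. \<forall>l\<in>W'. R' a m k \<and> R' b k l \<longrightarrow> R' (min a b) m l"
  proof (intro ballI impI)
    fix a b m k l assume a: "a \<in> S" "b \<in> S" "m \<in> W'" "k \<in> W'" "l \<in> W'" and r: "R' a m k \<and> R' b k l"
    show "R' (min a b) m l" using frD(2)[OF fr a(1,2) gW[OF a(3)] gW[OF a(4)] gW[OF a(5)]] r a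
      unfolding R'_def by simp
  qed
  have c4: "\<forall>a\<in>S. \<forall>b\<in>S. b < a \<longrightarrow> (\<forall>m\<in>W'. \<forall>k\<in>W'. \<forall>l\<in>W'. R' a m k \<and> R' b m l \<longrightarrow> R' b k l)"
  proof (intro ballI impI)
    fix a b m k l assume a: "a \<in> S" "b \<in> S" "b < a" "m \<in> W'" "k \<in> W'" "l \<in> W'" and r: "R' a m k \<and> R' b m l"
    show "R' b k l" using frD(3)[OF fr a(1,2,3) gW[OF a(4)] gW[OF a(5)] gW[OF a(6)]] r a
      unfolding R'_def by simp
  qed
  have c5: "\<forall>a\<in>S. \<forall>b\<in>S. b < a \<longrightarrow> (\<forall>m\<in>W'. \<forall>k\<in>W'. R' a m k \<longrightarrow> R' b m k)"
  proof (intro ballI impI)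
    fix a b m k assume a: "a \<in> S" "b \<in> S" "b < a" "m \<in> W'" "k \<in> W'" and r: "R' a m k"
    show "R' b m k" using frD(4)[OF fr a(1,2,3) gW[OF a(4)] gW[OF a(5)]] r a
      unfolding R'_def by simp
  qed
  have fr': "RC_frame S W' R'" unfolding RC_frame_def by (intro HOL.conjI c1 c2 c3 c4 c5)
  have pe': "w \<longrightarrow> persistent S W' R' V'"
  proof
    assume ww: w
    have P: "\<infinity> \<in> S \<longrightarrow> (\<forall>p. \<forall>x\<in>W. \<forall>y\<in>W. x \<in> V p \<and> R \<infinity> y x \<longrightarrow> y \<in> V p)"
    proof -
      have "persistent S W R V" using pe ww by (rule mp)
      then show ?thesis unfolding persistent_def .
    qed
    show "persistent S W' R' V'" unfolding persistent_def
    proof (intro impI allI ballI)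
      fix p m k assume inf: "\<infinity> \<in> S" and m: "m \<in> W'" and k: "k \<in> W'" and r: "m \<in> V' p \<and> R' \<infinity> k m"
      have r2: "g m \<in> V p" "R \<infinity> (g k) (g m)" using r unfolding V'_def R'_def by simp_all
      have P2: "\<forall>p. \<forall>x\<in>W. \<forall>y\<in>W. x \<in> V p \<and> R \<infinity> y x \<longrightarrow> y \<in> V p" using P inf by (rule mp)
      have "g k \<in> V p" using mp[OF bspec[OF bspec[OF spec[OF P2, of p] gW[OF m]] gW[OF k]]] r2 by simp
      then show "k \<in> V' p" unfolding V'_def using k by simp
    qed
  qed
  have "\<not> true_in W' R' V' A B"
    unfolding true_in_def using sat_tr[OF hW[OF x]] gh[OF x] sA sB hW[OF x] by auto
  moreover have "finite W'" unfolding W'_def using fin by simp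
  ultimately show ?thesis using fr' pe' by (intro exI[of _ W'] exI[of _ R'] exI[of _ V'] HOL.conjI)
qed


locale canon =
  fixes w :: bool and S :: "enat set" and Cl :: "'p form set"
  assumes finCl: "finite Cl" and ClL: "\<And>F. F \<in> Cl \<Longrightarrow> inL S F"
    and clC: "\<And>X Y. Conj X Y \<in> Cl \<Longrightarrow> X \<in> Cl \<and> Y \<in> Cl"
    and clD: "\<And>a X. Dia a X \<in> Cl \<Longrightarrow> X \<in> Cl"
begin

definition tp :: "'p form \<Rightarrow> 'p form set" where
  "tp E = {F \<in> Cl. deriv w S E F}"

definition cW :: "'p form set set" where
  "cW = {tp E | E. inL S E}"

definition cR :: "enat \<Rightarrow> 'p form set \<Rightarrow> 'p form set \<Rightarrow> bool" where
  "cR a G D \<longleftrightarrow> G \<in> cW \<and> D \<in> cW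
     \<and> (\<forall>c X. Dia c X \<in> Cl \<and> c \<le> a \<and> (X \<in> D \<or> Dia c X \<in> D) \<longrightarrow> Dia c X \<in> G)
     \<and> (\<forall>c X. Dia c X \<in> Cl \<and> c < a \<and> Dia c X \<in> G \<longrightarrow> Dia c X \<in> D)
     \<and> (w \<and> a = \<infinity> \<longrightarrow> D \<subseteq> G)"

definition cV :: "'p \<Rightarrow> 'p form set set" where
  "cV p = {G \<in> cW. Var p \<in> G}"

lemma tp_iff: "F \<in> tp E \<longleftrightarrow> F \<in> Cl \<and> deriv w S E F"
  by (simp add: tp_def)

lemma cW_finite: "finite cW"
proof -
  have "cW \<subseteq> Pow Cl" unfolding cW_def tp_def by auto
  then show ?thesis using finCl by (meson finite_Pow_iff finite_subset)
qed

lemma tp_in_cW: "inL S E \<Longrightarrow> tp E \<in> cW"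
  unfolding cW_def by blast

lemma cR_trans:
  assumes r1: "cR a G D" and r2: "cR b D T"
  shows "cR (min a b) G T"
  unfolding cR_def
proof (intro HOL.conjI allI impI)
  show "G \<in> cW" "T \<in> cW" using r1 r2 unfolding cR_def by simp_all
next
  fix c X assume h: "Dia c X \<in> Cl \<and> c \<le> min a b \<and> (X \<in> T \<or> Dia c X \<in> T)"
  then have "Dia c X \<in> D" using r2 unfolding cR_def by simp
  then show "Dia c X \<in> G" using r1 h unfolding cR_def by simp
next
  fix c X assume h: "Dia c X \<in> Cl \<and> c < min a b \<and> Dia c X \<in> G"
  then have "Dia c X \<in> D" using r1 unfolding cR_def by simp
  then show "Dia c X \<in> T" using r2 h unfolding cR_def by simp
next
  assume h: "w \<and> min a b = \<infinity>"
  then have "a = \<infinity>" "b = \<infinity>" by (auto simp: min_def split: if_splits)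
  then show "T \<subseteq> G" using r1 r2 h unfolding cR_def by blast
qed

lemma cR_J:
  assumes ba: "b < a" and r1: "cR a G D" and r2: "cR b G T"
  shows "cR b D T"
  unfolding cR_def
proof (intro HOL.conjI allI impI)
  show "D \<in> cW" "T \<in> cW" using r1 r2 unfolding cR_def by simp_all
next
  fix c X assume h: "Dia c X \<in> Cl \<and> c \<le> b \<and> (X \<in> T \<or> Dia c X \<in> T)"
  then have "Dia c X \<in> G" using r2 unfolding cR_def by simp
  moreover have "c < a" using le_less_trans[of c b a] h ba by simp
  ultimately show "Dia c X \<in> D" using r1 h unfolding cR_def by simp
next
  fix c X assume h: "Dia c X \<in> Cl \<and> c < b \<and> Dia c X \<in> D"
  moreover have "c \<le> a" using less_imp_le[OF less_trans[of c b a]] h ba by simp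
  ultimately have "Dia c X \<in> G" using r1 unfolding cR_def by simp
  then show "Dia c X \<in> T" using r2 h unfolding cR_def by simp
next
  assume h: "w \<and> b = \<infinity>"
  then show "T \<subseteq> D" using ba by simp
qed

lemma cR_mono:
  assumes ba: "b < a" and r1: "cR a G D"
  shows "cR b G D"
  unfolding cR_def
proof (intro HOL.conjI allI impI)
  show "G \<in> cW" "D \<in> cW" using r1 unfolding cR_def by simp_all
next
  fix c X assume h: "Dia c X \<in> Cl \<and> c \<le> b \<and> (X \<in> D \<or> Dia c X \<in> D)"
  moreover have "c \<le> a" using less_imp_le[OF le_less_trans[of c b a]] h ba by simp
  ultimately show "Dia c X \<in> G" using r1 unfolding cR_def by simp
next
  fix c X assume h: "Dia c X \<in> Cl \<and> c < b \<and> Dia c X \<in> G"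
  moreover have "c < a" using less_trans[of c b a] h ba by simp
  ultimately show "Dia c X \<in> D" using r1 unfolding cR_def by simp
next
  assume h: "w \<and> b = \<infinity>"
  then show "D \<subseteq> G" using ba by simp
qed

lemma frame: "RC_frame S cW cR"
proof -
  have c1: "cW \<noteq> {}" using tp_in_cW[of Top] by auto
  have c2: "\<forall>a\<in>S. \<forall>m k. cR a m k \<longrightarrow> m \<in> cW \<and> k \<in> cW" unfolding cR_def by simp
  have c3: "\<forall>a\<in>S. \<forall>b\<in>S. \<forall>m\<in>cW. \<forall>k\<in>cW. \<forall>l\<in>cW. cR a m k \<and> cR b k l \<longrightarrow> cR (min a b) m l"
    using cR_trans by blast
  have c4: "\<forall>a\<in>S. \<forall>b\<in>S. b < a \<longrightarrow> (\<forall>m\<in>cW. \<forall>k\<in>cW. \<forall>l\<in>cW. cR a m k \<and> cR b m l \<longrightarrow> cR b k l)"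
    using cR_J by blast
  have c5: "\<forall>a\<in>S. \<forall>b\<in>S. b < a \<longrightarrow> (\<forall>m\<in>cW. \<forall>k\<in>cW. cR a m k \<longrightarrow> cR b m k)"
    using cR_mono by blast
  show ?thesis unfolding RC_frame_def by (intro HOL.conjI c1 c2 c3 c4 c5)
qed

lemma pers: "w \<Longrightarrow> persistent S cW cR cV"
  unfolding persistent_def
proof (intro impI allI ballI)
  fix p x y assume ww: w and xy: "x \<in> cV p \<and> cR \<infinity> y x"
  then have "x \<subseteq> y" "Var p \<in> x" "y \<in> cW" unfolding cR_def cV_def by auto
  then show "y \<in> cV p" unfolding cV_def by auto
qed

lemma exist:
  assumes G: "inL S G" and dC: "Dia a C \<in> tp G"
  shows "\<exists>D\<in>cW. cR a (tp G) D \<and> C \<in> D"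
proof -
  have dCl: "Dia a C \<in> Cl" and dG: "deriv w S G (Dia a C)" using dC tp_iff by auto
  have aS: "a \<in> S" and CL: "inL S C" using ClL[OF dCl] by auto
  have CCl: "C \<in> Cl" using clD[OF dCl] .
  define P where "P = {F \<in> tp G. \<exists>c X. F = Dia c X \<and> c < a}"
  have "P \<subseteq> Cl" unfolding P_def tp_def by auto
  then have "finite P" using finCl finite_subset by blast
  then obtain L where L: "set L = P" using finite_list by blast
  have Lprop: "\<forall>F\<in>set L. \<exists>c X. F = Dia c X \<and> c < a \<and> c \<in> S \<and> inL S X \<and> deriv w S G F"
  proof
    fix F assume "F \<in> set L"
    then have F: "F \<in> Cl" "deriv w S G F" "\<exists>c X. F = Dia c X \<and> c < a" using L unfolding P_def tp_def by auto
    then obtain c X where cX: "F = Dia c X" "c < a" by blast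
    have "c \<in> S" "inL S X" using ClL[OF F(1)] cX by auto
    then show "\<exists>c X. F = Dia c X \<and> c < a \<and> c \<in> S \<and> inL S X \<and> deriv w S G F" using cX F by blast
  qed
  have LL: "\<forall>F\<in>set L. inL S F" using L \<open>P \<subseteq> Cl\<close> ClL by blast
  define E where "E = bigc L C"
  have EL: "inL S E" unfolding E_def using bigc_inL[OF CL LL] .
  have GE: "deriv w S G (Dia a E)" unfolding E_def using bigc_J[OF dG aS CL Lprop] .
  have EC: "deriv w S E C" unfolding E_def using bigc_E1[OF CL LL] .
  have EF: "F \<in> P \<Longrightarrow> deriv w S E F" for F unfolding E_def using bigc_E2[OF CL LL] L by blast
  have GEX: "deriv w S E X \<Longrightarrow> deriv w S G (Dia a X)" for X
    using deriv.cut[OF GE deriv.mono[OF aS]] by blast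
  have R: "cR a (tp G) (tp E)"
    unfolding cR_def
  proof (intro HOL.conjI allI impI)
    show "tp G \<in> cW" "tp E \<in> cW" using tp_in_cW G EL by auto
  next
    fix c X assume h: "Dia c X \<in> Cl \<and> c \<le> a \<and> (X \<in> tp E \<or> Dia c X \<in> tp E)"
    have cS: "c \<in> S" and XL: "inL S X" using ClL[of "Dia c X"] h by auto
    have "deriv w S G (Dia c X)"
    proof (cases "X \<in> tp E")
      case True
      then have "deriv w S G (Dia a X)" using GEX tp_iff by blast
      then show ?thesis
      proof (cases "c = a")
        case True
        then show ?thesis using \<open>deriv w S G (Dia a X)\<close> by simp
      next
        case False
        then have "c < a" using le_neq_trans[of c a] h by simp
        then show ?thesis using deriv.cut[OF \<open>deriv w S G (Dia a X)\<close> deriv.RC[OF aS cS _ XL]] by blast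
      qed
    next
      case False
      then have "deriv w S E (Dia c X)" using h tp_iff by blast
      then have "deriv w S G (Dia a (Dia c X))" using GEX by blast
      then show ?thesis using deriv.cut[OF _ deriv.mix1[OF aS cS _ XL]] h by blast
    qed
    then show "Dia c X \<in> tp G" using h tp_iff by blast
  next
    fix c X assume h: "Dia c X \<in> Cl \<and> c < a \<and> Dia c X \<in> tp G"
    then have "Dia c X \<in> P" unfolding P_def by blast
    then show "Dia c X \<in> tp E" using EF h tp_iff by blast
  next
    assume h: "w \<and> a = \<infinity>"
    show "tp E \<subseteq> tp G"
    proof
      fix F assume "F \<in> tp E"
      then have F: "F \<in> Cl" "deriv w S E F" using tp_iff by auto
      have "deriv w S (Dia \<infinity> E) E" using deriv.omega[of w S E] h aS EL by simp
      then have "deriv w S G E" using deriv.cut[OF GE] h by simp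
      then show "F \<in> tp G" using deriv.cut[OF _ F(2)] F(1) tp_iff by blast
    qed
  qed
  moreover have "C \<in> tp E" using CCl EC tp_iff by blast
  ultimately show ?thesis using tp_in_cW[OF EL] by blast
qed

lemma truth: "C \<in> Cl \<Longrightarrow> Gm \<in> cW \<Longrightarrow> sat cW cR cV Gm C \<longleftrightarrow> C \<in> Gm"
proof (induction C arbitrary: Gm)
  case (Var p)
  then show ?case by (simp add: cV_def)
next
  case Top
  then obtain E where E: "Gm = tp E" "inL S E" unfolding cW_def by blast
  then show ?case using deriv.top[OF E(2)] Top.prems tp_iff by simp
next
  case (Conj X Y)
  obtain E where E: "Gm = tp E" "inL S E" using Conj.prems unfolding cW_def by blast
  have cl: "X \<in> Cl" "Y \<in> Cl" using clC[OF Conj.prems(1)] by auto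
  have XL: "inL S X" "inL S Y" using ClL cl by auto
  have "Conj X Y \<in> Gm \<longleftrightarrow> X \<in> Gm \<and> Y \<in> Gm"
  proof
    assume "Conj X Y \<in> Gm"
    then have d: "deriv w S E (Conj X Y)" using E tp_iff by blast
    have "deriv w S E X" using deriv.cut[OF d deriv.conjE1[OF XL]] .
    moreover have "deriv w S E Y" using deriv.cut[OF d deriv.conjE2[OF XL]] .
    ultimately show "X \<in> Gm \<and> Y \<in> Gm" using E cl tp_iff by blast
  next
    assume "X \<in> Gm \<and> Y \<in> Gm"
    then have "deriv w S E X" "deriv w S E Y" using E tp_iff by auto
    then have "deriv w S E (Conj X Y)" by (rule deriv.conjI)
    then show "Conj X Y \<in> Gm" using E Conj.prems(1) tp_iff by blast
  qed
  then show ?case using Conj.IH[OF _ Conj.prems(2)] cl by simp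
next
  case (Dia a C)
  have cl: "C \<in> Cl" using clD[OF Dia.prems(1)] .
  show ?case
  proof
    assume "sat cW cR cV Gm (Dia a C)"
    then obtain D where D: "D \<in> cW" "cR a Gm D" "sat cW cR cV D C" by auto
    have "C \<in> D" using Dia.IH[OF cl D(1)] D(3) by simp
    have "\<forall>c X. Dia c X \<in> Cl \<and> c \<le> a \<and> (X \<in> D \<or> Dia c X \<in> D) \<longrightarrow> Dia c X \<in> Gm"
      using D(2) unfolding cR_def by (elim HOL.conjE)
    then show "Dia a C \<in> Gm" using \<open>C \<in> D\<close> Dia.prems(1) by simp
  next
    assume h: "Dia a C \<in> Gm"
    obtain E where E: "Gm = tp E" "inL S E" using Dia.prems unfolding cW_def by blast
    obtain D where D: "D \<in> cW" "cR a Gm D" "C \<in> D" using exist[OF E(2)] h E(1) by blast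
    have "sat cW cR cV D C" using Dia.IH[OF cl D(1)] D(3) by simp
    then show "sat cW cR cV Gm (Dia a C)" using D by auto
  qed
qed

end

fun sub :: "'p form \<Rightarrow> 'p form set" where
  "sub (Var p) = {Var p}"
| "sub Top = {Top}"
| "sub (Conj X Y) = insert (Conj X Y) (sub X \<union> sub Y)"
| "sub (Dia a X) = insert (Dia a X) (sub X)"

lemma sub_finite: "finite (sub A)"
  by (induction A) auto

lemma sub_self: "A \<in> sub A"
  by (cases A) auto

lemma sub_inL: "inL S A \<Longrightarrow> F \<in> sub A \<Longrightarrow> inL S F"
  by (induction A) auto

lemma sub_C: "Conj X Y \<in> sub A \<Longrightarrow> X \<in> sub A \<and> Y \<in> sub A"
  by (induction A) (auto simp: sub_self)

lemma sub_D: "Dia a X \<in> sub A \<Longrightarrow> X \<in> sub A"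
  by (induction A) (auto simp: sub_self)

lemma complete_w:
  fixes A B :: "'p form"
  assumes AL: "inL S A" and BL: "inL S B"
  shows "deriv w S A B \<longleftrightarrow> (\<forall>(W::nat set) R V. finite W \<and> RC_frame S W R \<and> (w \<longrightarrow> persistent S W R V) \<longrightarrow> true_in W R V A B)"
    (is "_ \<longleftrightarrow> ?R")
proof
  assume d: "deriv w S A B"
  show ?R
  proof (intro allI impI)
    fix W :: "nat set" and R and V :: "'p \<Rightarrow> nat set" assume h: "finite W \<and> RC_frame S W R \<and> (w \<longrightarrow> persistent S W R V)"
    show "true_in W R V A B" unfolding true_in_def
    proof (intro ballI impI)
      fix x assume "x \<in> W" "sat W R V x A"
      then show "sat W R V x B" using sound[OF d, of W R V x] h by simp
    qed
  qed
next
  assume v: ?R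
  show "deriv w S A B"
  proof (rule ccontr)
    assume nd: "\<not> deriv w S A B"
    define Cl where "Cl = sub A \<union> sub B"
    interpret C: canon w S Cl
    proof
      show "finite Cl" unfolding Cl_def by (simp add: sub_finite)
    next
      fix F assume "F \<in> Cl" then show "inL S F" unfolding Cl_def using sub_inL AL BL by blast
    next
      fix X Y assume "Conj X Y \<in> Cl" then show "X \<in> Cl \<and> Y \<in> Cl" unfolding Cl_def using sub_C by blast
    next
      fix a X assume "Dia a X \<in> Cl" then show "X \<in> Cl" unfolding Cl_def using sub_D by blast
    qed
    have ACl: "A \<in> Cl" and BCl: "B \<in> Cl" unfolding Cl_def using sub_self by auto
    have xW: "C.tp A \<in> C.cW" using C.tp_in_cW[OF AL] .
    have "A \<in> C.tp A" using ACl deriv.refl[OF AL] C.tp_iff by blast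
    then have sA: "sat C.cW C.cR C.cV (C.tp A) A" using C.truth[OF ACl xW] by simp
    have "B \<notin> C.tp A" using nd C.tp_iff by blast
    then have sB: "\<not> sat C.cW C.cR C.cV (C.tp A) B" using C.truth[OF BCl xW] by simp
    have pe: "w \<longrightarrow> persistent S C.cW C.cR C.cV" using C.pers by blast
    obtain W' :: "nat set" and R' V' where "finite W'" "RC_frame S W' R'" "w \<longrightarrow> persistent S W' R' V'"
      "\<not> true_in W' R' V' A B"
      using transfer[OF C.cW_finite C.frame pe xW sA sB] by blast
    then show False using v by blast
  qed
qed

theorem corollary4p3:
  fixes S :: "enat set" and A B :: "'p form"
  assumes "finite S" and "inL S A" and "inL S B"
  shows "(RC_der S A B \<longleftrightarrow> valid_finite_RC S A B)
       \<and> (RCw_der S A B \<longleftrightarrow> valid_finite_persistent_RC S A B)"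
proof
  show "RC_der S A B \<longleftrightarrow> valid_finite_RC S A B"
    using complete_w[OF assms(2,3), of False] unfolding valid_finite_RC_def by simp
  show "RCw_der S A B \<longleftrightarrow> valid_finite_persistent_RC S A B"
    using complete_w[OF assms(2,3), of True] unfolding valid_finite_persistent_RC_def by simp
qed

end
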